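(* Fix a node $n$ of the control flow graph and regard its extractor functions as functions of their inputs: $\mathit{Def}(a)$, $\mathit{Kill}(a)$, $\mathit{Pointee}(a)$ (with $A$ replaced by $a$) and $\mathit{Ref}(l,a)$ (with $A$ replaced by $a$ and $\mathit{Lout}_n$ replaced by $l$), for $l \subseteq \mathbf{P}$ and $a \subseteq \mathbf{P}\times\mathbf{V}$. Define $$f_L(l,a) = (l - \mathit{Kill}(a)) \cup \mathit{Ref}(l,a),\qquad f_A(l,a) = \Big(\big(a - (\mathit{Kill}(a)\times \mathbf{V})\big)\cup\big(\mathit{Def}(a)\times \mathit{Pointee}(a)\big)\Big)\Big|_{l}.$$ Then $f_L$ and $f_A$ are monotonic with respect to the data-flow order: for all $l_1,l_2\subseteq\mathbf{P}$ and $a_1,a_2\subseteq \mathbf{P}\times\mathbf{V}$ with $l_1\supseteq l_2$ and $a_1\supseteq a_2$, we have $f_L(l_1,a_1)\supseteq f_L(l_2,a_2)$ and $f_A(l_1,a_1)\supseteq f_A(l_2,a_2)$.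
   Context: $\mathbf{V}$ is a finite set of variables, $\mathbf{P}\subseteq\mathbf{V}$ the set of pointer variables, and $\mathbf{V}\setminus\mathbf{P}$ contains a special element $?$ (undefined location). Every node (statement) is of one of the forms: "use $x$", "$x=\&a$", "$x=y$", "$x=*y$", "$*x=y$", or "other", where $x,y\in\mathbf{P}$, $a\in\mathbf{V}$. Relation notation for $R\subseteq\mathbf{P}\times\mathbf{V}$ and a set $X$: $R\,X=\{v\mid u\in X,\ (u,v)\in R\}$; $R|_X=\{(u,v)\in R\mid u\in X\}$; $R^2=\{(u,w)\mid (u,v)\in R,\ (v,w)\in R\}$ (so necessarily $v\in\mathbf{P}$). $\mathit{Must}(R)=\bigcup_{x\in\mathbf{P}}\{x\}\times M_x$, where $M_x=\mathbf{V}$ if $R|_{\{x\}}=\emptyset$ or $R|_{\{x\}}=\{(x,?)\}$; $M_x=\{y\}$ if $R|_{\{x\}}=\{(x,y)\}$ with $y\neq ?$; and $M_x=\emptyset$ otherwise. Extractor functions of node $n$, given a points-to relation $A\subseteq\mathbf{P}\times\mathbf{V}$ and a set $L\subseteq\mathbf{P}$ (in the analysis $A=\mathit{Ain}_n$, $L=\mathit{Lout}_n$): - use $x$: $\mathit{Def}=\emptyset$, $\mathit{Kill}=\emptyset$, $\mathit{Ref}=\{x\}$, $\mathit{Pointee}=\emptyset$. - $x=\&a$: $\mathit{Def}=\{x\}$, $\mathit{Kill}=\{x\}$, $\mathit{Ref}=\emptyset$, $\mathit{Pointee}=\{a\}$. - $x=y$: $\mathit{Def}=\{x\}$, $\mathit{Kill}=\{x\}$,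 $\mathit{Ref}=\{y\}$ if $\mathit{Def}\cap L\neq\emptyset$ and $\emptyset$ otherwise, $\mathit{Pointee}=A\{y\}$. - $x=*y$: $\mathit{Def}=\{x\}$, $\mathit{Kill}=\{x\}$, $\mathit{Ref}=\{y\}\cup\big((A\{y\})\cap\mathbf{P}\big)$ if $\mathit{Def}\cap L\neq\emptyset$ and $\emptyset$ otherwise, $\mathit{Pointee}=A^2\{y\}$. - $*x=y$: $\mathit{Def}=(A\{x\})\cap\mathbf{P}$, $\mathit{Kill}=(\mathit{Must}(A)\{x\})\cap\mathbf{P}$, $\mathit{Ref}=\{x,y\}$ if $\mathit{Def}\cap L\neq\emptyset$ and $\{x\}$ otherwise, $\mathit{Pointee}=A\{y\}$. - other: all four are $\emptyset$. *)

theory Defs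
  imports Main
begin

text \<open>Variables are of type 'v. The finite variable set V, the pointer variables P \<subseteq> V
  and the undefined location q (written ? in the paper, q \<in> V - P) are explicit parameters.\<close>

datatype 'v node =
    Use 'v
  | AddrOf 'v 'v      (* x = &a *)
  | Copy 'v 'v        (* x = y *)
  | Load 'v 'v        (* x = *y *)
  | Store 'v 'v       (* *x = y *)
  | Other

definition setting :: "'v set \<Rightarrow> 'v set \<Rightarrow> 'v \<Rightarrow> bool" where
  "setting V P q \<longleftrightarrow> finite V \<and> P \<subseteq> V \<and> q \<in> V - P"

fun wf_node :: "'v set \<Rightarrow> 'v set \<Rightarrow> 'v node \<Rightarrow> bool" where
  "wf_node V P (Use x) = (x \<in> P)"
| "wf_node V P (AddrOf x a) = (x \<in> P \<and> a \<in> V)"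
| "wf_node V P (Copy x y) = (x \<in> P \<and> y \<in> P)"
| "wf_node V P (Load x y) = (x \<in> P \<and> y \<in> P)"
| "wf_node V P (Store x y) = (x \<in> P \<and> y \<in> P)"
| "wf_node V P Other = True"

text \<open>R X = R `` X (relational image); restriction R|_X; R^2 = R O R.\<close>
definition restr :: "('v \<times> 'v) set \<Rightarrow> 'v set \<Rightarrow> ('v \<times> 'v) set" where
  "restr R X = {(u, v) \<in> R. u \<in> X}"

definition MustM :: "'v set \<Rightarrow> 'v \<Rightarrow> ('v \<times> 'v) set \<Rightarrow> 'v \<Rightarrow> 'v set" where
  "MustM V q R x =
     (if restr R {x} = {} \<or> restr R {x} = {(x, q)} then V
      else if \<exists>y. y \<noteq> q \<and> restr R {x} = {(x, y)} then {THE y. restr R {x} = {(x, y)}}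
      else {})"

definition Must :: "'v set \<Rightarrow> 'v set \<Rightarrow> 'v \<Rightarrow> ('v \<times> 'v) set \<Rightarrow> ('v \<times> 'v) set" where
  "Must V P q R = (\<Union>x\<in>P. {x} \<times> MustM V q R x)"

fun Def :: "'v set \<Rightarrow> 'v node \<Rightarrow> ('v \<times> 'v) set \<Rightarrow> 'v set" where
  "Def P (Use x) A = {}"
| "Def P (AddrOf x a) A = {x}"
| "Def P (Copy x y) A = {x}"
| "Def P (Load x y) A = {x}"
| "Def P (Store x y) A = (A `` {x}) \<inter> P"
| "Def P Other A = {}"

fun Kill :: "'v set \<Rightarrow> 'v set \<Rightarrow> 'v \<Rightarrow> 'v node \<Rightarrow> ('v \<times> 'v) set \<Rightarrow> 'v set" where
  "Kill V P q (Use x) A = {}"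
| "Kill V P q (AddrOf x a) A = {x}"
| "Kill V P q (Copy x y) A = {x}"
| "Kill V P q (Load x y) A = {x}"
| "Kill V P q (Store x y) A = (Must V P q A `` {x}) \<inter> P"
| "Kill V P q Other A = {}"

fun Ref :: "'v set \<Rightarrow> 'v node \<Rightarrow> 'v set \<Rightarrow> ('v \<times> 'v) set \<Rightarrow> 'v set" where
  "Ref P (Use x) L A = {x}"
| "Ref P (AddrOf x a) L A = {}"
| "Ref P (Copy x y) L A = (if Def P (Copy x y) A \<inter> L \<noteq> {} then {y} else {})"
| "Ref P (Load x y) L A =
     (if Def P (Load x y) A \<inter> L \<noteq> {} then {y} \<union> ((A `` {y}) \<inter> P) else {})"
| "Ref P (Store x y) L A = (if Def P (Store x y) A \<inter> L \<noteq> {} then {x, y} else {x})"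
| "Ref P Other L A = {}"

fun Pointee :: "'v node \<Rightarrow> ('v \<times> 'v) set \<Rightarrow> 'v set" where
  "Pointee (Use x) A = {}"
| "Pointee (AddrOf x a) A = {a}"
| "Pointee (Copy x y) A = A `` {y}"
| "Pointee (Load x y) A = (A O A) `` {y}"
| "Pointee (Store x y) A = A `` {y}"
| "Pointee Other A = {}"

definition fL :: "'v set \<Rightarrow> 'v set \<Rightarrow> 'v \<Rightarrow> 'v node \<Rightarrow> 'v set \<Rightarrow> ('v \<times> 'v) set \<Rightarrow> 'v set" where
  "fL V P q n l a = (l - Kill V P q n a) \<union> Ref P n l a"

definition fA :: "'v set \<Rightarrow> 'v set \<Rightarrow> 'v \<Rightarrow> 'v node \<Rightarrow> 'v set \<Rightarrow> ('v \<times> 'v) set \<Rightarrow> ('v \<times> 'v) set" where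
  "fA V P q n l a =
     restr ((a - (Kill V P q n a \<times> V)) \<union> (Def P n a \<times> Pointee n a)) l"

end

theory Submission
  imports Defs
begin

lemma restr_mono: "R2 \<subseteq> R1 \<Longrightarrow> restr R2 X \<subseteq> restr R1 X"
  unfolding restr_def by auto

lemma restr_single_sub: "restr R {x} \<subseteq> {x} \<times> UNIV"
  unfolding restr_def by auto

lemma sub_single: "S \<subseteq> {p} \<Longrightarrow> S = {} \<or> S = {p}" by auto

lemma MustM_anti:
  assumes "a2 \<subseteq> a1" "a1 \<subseteq> P \<times> V"
  shows "MustM V q a1 x \<subseteq> MustM V q a2 x"
proof -
  let ?R1 = "restr a1 {x}" and ?R2 = "restr a2 {x}"
  have sub: "?R2 \<subseteq> ?R1" using restr_mono[OF assms(1)] .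
  show ?thesis
  proof (cases "?R1 = {} \<or> ?R1 = {(x, q)}")
    case True
    then have "?R2 = {} \<or> ?R2 = {(x,q)}" using sub by auto
    then show ?thesis using True unfolding MustM_def by simp
  next
    case F: False
    show ?thesis
    proof (cases "\<exists>y. y \<noteq> q \<and> ?R1 = {(x, y)}")
      case True
      then obtain y where y: "y \<noteq> q" "?R1 = {(x,y)}" by blast
      have "(x,y) \<in> ?R1" using y(2) by simp
      then have yV: "y \<in> V" using assms(2) unfolding restr_def by auto
      have t1: "(THE z. ?R1 = {(x, z)}) = y" using y(2) by (intro the_equality) auto
      have M1: "MustM V q a1 x = {y}" using F True t1 unfolding MustM_def by simp
      have "?R2 = {} \<or> ?R2 = {(x,y)}" using sub y(2) by (intro sub_single) simp
      then show ?thesis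
      proof
        assume "?R2 = {}" then show ?thesis using M1 yV unfolding MustM_def by simp
      next
        assume h: "?R2 = {(x,y)}"
        have t: "(THE z. ?R2 = {(x, z)}) = y" using h by (intro the_equality) auto
        have "\<not> (?R2 = {} \<or> ?R2 = {(x, q)})" using h y(1) by auto
        moreover have "\<exists>z. z \<noteq> q \<and> ?R2 = {(x, z)}" using h y(1) by blast
        ultimately have "MustM V q a2 x = {y}" using t unfolding MustM_def by simp
        then show ?thesis using M1 by simp
      qed
    next
      case False
      then have "MustM V q a1 x = {}" using F unfolding MustM_def by (simp only: if_False)
      then show ?thesis by simp
    qed
  qed
qed

lemma Kill_anti:
  assumes "a2 \<subseteq> a1" "a1 \<subseteq> P \<times> V"
  shows "Kill V P q n a1 \<subseteq> Kill V P q n a2"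
proof (cases n)
  case (Store x y)
  have "Must V P q a1 `` {x} \<subseteq> Must V P q a2 `` {x}"
    using MustM_anti[OF assms] unfolding Must_def by blast
  then show ?thesis using Store by auto
qed auto

theorem theorem1:
  fixes V P :: "'v set" and q :: 'v and n :: "'v node"
    and l1 l2 :: "'v set" and a1 a2 :: "('v \<times> 'v) set"
  assumes "setting V P q"
    and "wf_node V P n"
    and "l1 \<subseteq> P" and "l2 \<subseteq> P"
    and "a1 \<subseteq> P \<times> V" and "a2 \<subseteq> P \<times> V"
    and "l2 \<subseteq> l1" and "a2 \<subseteq> a1"
  shows "fL V P q n l2 a2 \<subseteq> fL V P q n l1 a1 \<and> fA V P q n l2 a2 \<subseteq> fA V P q n l1 a1"
proof -
  have K: "Kill V P q n a1 \<subseteq> Kill V P q n a2" using Kill_anti[OF assms(8,5)] .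
  have D: "Def P n a2 \<subseteq> Def P n a1" using assms(8) by (cases n) auto
  have Pt: "Pointee n a2 \<subseteq> Pointee n a1" using assms(8) by (cases n) auto
  have R: "Ref P n l2 a2 \<subseteq> Ref P n l1 a1"
  proof (cases n)
    case (Store x y) then show ?thesis using assms(7,8) by auto
  next
    case (Copy x y) then show ?thesis using assms(7,8) by auto
  next
    case (Load x y) then show ?thesis using assms(7,8) by auto
  qed auto
  have 1: "fL V P q n l2 a2 \<subseteq> fL V P q n l1 a1"
    unfolding fL_def using K R assms(7) by blast
  have 2: "fA V P q n l2 a2 \<subseteq> fA V P q n l1 a1"
    unfolding fA_def restr_def using K D Pt assms(7,8) by blast
  show ?thesis using 1 2 by blast
qed

end
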